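(* Let $n,r\ge 1$, ${\bf A}\in\mathbb{H}^n$, $g\in\mathcal{G}$, and ${\bf X}_0\in\mathbb{C}^{n\times r}$. Put ${\bf W}_0={\bf X}_0^{\mathrm H}{\bf A}{\bf X}_0$ and ${\bf G}=\nabla g({\bf W}_0)\in\mathbb{H}^r$. Define ${\bf L}({\bf X})$ by $${\bf L}({\bf X})={\bf X}^{\mathrm H}{\bf A}^{(-)}{\bf X}+{\bf X}^{\mathrm H}{\bf A}^{(+)}{\bf X}_0+{\bf X}_0^{\mathrm H}{\bf A}^{(+)}{\bf X}-{\bf X}_0^{\mathrm H}{\bf A}^{(+)}{\bf X}_0\quad\text{if } g \text{ is MND},$$ $${\bf L}({\bf X})={\bf X}^{\mathrm H}{\bf A}^{(+)}{\bf X}+{\bf X}^{\mathrm H}{\bf A}^{(-)}{\bf X}_0+{\bf X}_0^{\mathrm H}{\bf A}^{(-)}{\bf X}-{\bf X}_0^{\mathrm H}{\bf A}^{(-)}{\bf X}_0\quad\text{if } g \text{ is MNI},$$ and $$l({\bf X};{\bf X}_0)=\mathrm{tr}\big({\bf L}({\bf X})^{\mathrm H}{\bf G}\big)+g({\bf W}_0)-\mathrm{tr}({\bf W}_0{\bf G}),\qquad {\bf X}\in\mathbb{C}^{n\times r}.$$ Then: (i) $l(\cdot;{\bf X}_0)$ is a real-valued concave function on $\mathbb{C}^{n\times r}$ (viewed as a real vector space); (ii) $l({\bf X};{\bf X}_0)\le g({\bf X}^{\mathrm H}{\bf A}{\bf X})$ for all ${\bf X}\in\mathbb{C}^{n\times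 r}$; (iii) $l({\bf X}_0;{\bf X}_0)=g({\bf X}_0^{\mathrm H}{\bf A}{\bf X}_0)$; (iv) the functions ${\bf X}\mapsto l({\bf X};{\bf X}_0)$ and ${\bf X}\mapsto g({\bf X}^{\mathrm H}{\bf A}{\bf X})$ have the same (real Fréchet) derivative at ${\bf X}={\bf X}_0$.
   Context: $\mathbb{H}^m$ denotes the real vector space of $m\times m$ complex Hermitian matrices, with inner product $\langle{\bf U},{\bf V}\rangle=\mathrm{tr}({\bf U}{\bf V})$; ${\bf U}\succeq{\bf V}$ means ${\bf U}-{\bf V}$ is positive semidefinite. For ${\bf A}\in\mathbb{H}^n$ with eigen-decomposition ${\bf A}=\sum_i\lambda_i{\bf u}_i{\bf u}_i^{\mathrm H}$ (orthonormal ${\bf u}_i$), ${\bf A}^{(+)}=\sum_{\lambda_i>0}\lambda_i{\bf u}_i{\bf u}_i^{\mathrm H}$ and ${\bf A}^{(-)}=\sum_{\lambda_i<0}\lambda_i{\bf u}_i{\bf u}_i^{\mathrm H}$, so ${\bf A}={\bf A}^{(+)}+{\bf A}^{(-)}$. A function $g:\mathbb{H}^r\to\mathbb{R}$ is MND (matrix nondecreasing) if ${\bf W}_1\succeq{\bf W}_2\Rightarrow g({\bf W}_1)\ge g({\bf W}_2)$, and MNI (matrix nonincreasing) if ${\bf W}_1\succeq{\bf W}_2\Rightarrow g({\bf W}_1)\le g({\bf W}_2)$. $\mathcal{G}$ is the family of differentiable convex functions $g:\mathbb{H}^r\to\mathbb{R}$ that are MND or MNI. For differentiable $g$, $\nabla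 g({\bf W}_0)\in\mathbb{H}^r$ denotes its gradient with respect to the inner product above, i.e. $g({\bf W}_0+\Delta)=g({\bf W}_0)+\mathrm{tr}(\nabla g({\bf W}_0)\Delta)+o(\|\Delta\|)$ for $\Delta\in\mathbb{H}^r$. *)

theory Defs
  imports "HOL-Analysis.Analysis"
begin

text \<open>Complex matrices with m rows and k columns are modelled as complex^'k^'m
  (rows indexed by 'm, columns by 'k); this is a real Euclidean space.\<close>

definition ctrans :: "complex^'k^'m \<Rightarrow> complex^'m^'k" where
  "ctrans X = (\<chi> i j. cnj (X $ j $ i))"

definition hermitian :: "complex^'m^'m \<Rightarrow> bool" where
  "hermitian M \<longleftrightarrow> ctrans M = M"

definition herm_set :: "(complex^'m^'m) set" where
  "herm_set = {M. hermitian M}"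

definition cinner :: "complex^'m \<Rightarrow> complex^'m \<Rightarrow> complex" where
  "cinner u v = (\<Sum>k\<in>UNIV. cnj (u $ k) * v $ k)"

definition psd :: "complex^'m^'m \<Rightarrow> bool" where
  "psd M \<longleftrightarrow> hermitian M \<and> (\<forall>x. 0 \<le> Re (cinner x (M *v x)))"

definition outer :: "complex^'m \<Rightarrow> complex^'m^'m" where
  "outer u = (\<chi> a b. u $ a * cnj (u $ b))"

definition eigen_decomp :: "complex^'n^'n \<Rightarrow> ('n \<Rightarrow> real) \<Rightarrow> ('n \<Rightarrow> complex^'n) \<Rightarrow> bool" where
  "eigen_decomp A lam u \<longleftrightarrow>
     (\<forall>i j. cinner (u i) (u j) = (if i = j then 1 else 0)) \<and>
     A = (\<Sum>i\<in>UNIV. lam i *\<^sub>R outer (u i))"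

definition pos_part :: "complex^'n^'n \<Rightarrow> complex^'n^'n" where
  "pos_part A = (SOME P. \<exists>lam u. eigen_decomp A lam u \<and>
       P = (\<Sum>i\<in>{i. lam i > 0}. lam i *\<^sub>R outer (u i)))"

definition neg_part :: "complex^'n^'n \<Rightarrow> complex^'n^'n" where
  "neg_part A = (SOME P. \<exists>lam u. eigen_decomp A lam u \<and>
       P = (\<Sum>i\<in>{i. lam i < 0}. lam i *\<^sub>R outer (u i)))"

definition MND :: "(complex^'r^'r \<Rightarrow> real) \<Rightarrow> bool" where
  "MND g \<longleftrightarrow> (\<forall>W1 W2. hermitian W1 \<and> hermitian W2 \<and> psd (W1 - W2) \<longrightarrow> g W1 \<ge> g W2)"

definition MNI :: "(complex^'r^'r \<Rightarrow> real) \<Rightarrow> bool" where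
  "MNI g \<longleftrightarrow> (\<forall>W1 W2. hermitian W1 \<and> hermitian W2 \<and> psd (W1 - W2) \<longrightarrow> g W1 \<le> g W2)"

definition is_gradient :: "(complex^'r^'r \<Rightarrow> real) \<Rightarrow> complex^'r^'r \<Rightarrow> complex^'r^'r \<Rightarrow> bool" where
  "is_gradient g W G \<longleftrightarrow> hermitian G \<and>
     (g has_derivative (\<lambda>D. Re (trace (G ** D)))) (at W within herm_set)"

definition grad :: "(complex^'r^'r \<Rightarrow> real) \<Rightarrow> complex^'r^'r \<Rightarrow> complex^'r^'r" where
  "grad g W = (SOME G. is_gradient g W G)"

definition in_G :: "(complex^'r^'r \<Rightarrow> real) \<Rightarrow> bool" where
  "in_G g \<longleftrightarrow> convex_on herm_set g \<and> (\<forall>W\<in>herm_set. \<exists>G. is_gradient g W G)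
      \<and> (MND g \<or> MNI g)"

definition Lmat :: "bool \<Rightarrow> complex^'n^'n \<Rightarrow> complex^'r^'n \<Rightarrow> complex^'r^'n \<Rightarrow> complex^'r^'r" where
  "Lmat mnd A X0 X =
     (let P = (if mnd then neg_part A else pos_part A);
          Q = (if mnd then pos_part A else neg_part A)
      in ctrans X ** P ** X + ctrans X ** Q ** X0 + ctrans X0 ** Q ** X - ctrans X0 ** Q ** X0)"

definition lfun :: "bool \<Rightarrow> (complex^'r^'r \<Rightarrow> real) \<Rightarrow> complex^'n^'n \<Rightarrow> complex^'r^'n \<Rightarrow> complex^'r^'n \<Rightarrow> complex" where
  "lfun mnd g A X0 X =
     (let W0 = ctrans X0 ** A ** X0; G = grad g W0
      in trace (ctrans (Lmat mnd A X0 X) ** G) + of_real (g W0) - trace (W0 ** G))"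

end

theory Submission
  imports Defs
begin


section \<open>Complex inner product algebra\<close>

lemma scaleR_cplx: "r *\<^sub>R (z::complex) = of_real r * z"
  by (simp add: scaleR_conv_of_real)

lemma cinner_add_right: "cinner u (v + w) = cinner u v + cinner u w"
  unfolding cinner_def by (simp add: distrib_left sum.distrib)
lemma cinner_add_left: "cinner (u + v) w = cinner u w + cinner v w"
  unfolding cinner_def by (simp add: distrib_right sum.distrib)
lemma cinner_diff_right: "cinner u (v - w) = cinner u v - cinner u w"
  unfolding cinner_def by (simp add: right_diff_distrib sum_subtractf)
lemma cinner_diff_left: "cinner (u - v) w = cinner u w - cinner v w"
  unfolding cinner_def by (simp add: left_diff_distrib sum_subtractf)
lemma cinner_scaleR_right: "cinner u (r *\<^sub>R v) = of_real r * cinner u v"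
  unfolding cinner_def by (simp add: sum_distrib_left scaleR_cplx mult_ac)
lemma cinner_scaleR_left: "cinner (r *\<^sub>R u) v = of_real r * cinner u v"
  unfolding cinner_def by (simp add: sum_distrib_left scaleR_cplx mult_ac)
lemma cinner_smult_right: "cinner u (c *s v) = c * cinner u v"
  unfolding cinner_def by (simp add: sum_distrib_left mult_ac)
lemma cinner_smult_left: "cinner (c *s u) v = cnj c * cinner u v"
  unfolding cinner_def by (simp add: sum_distrib_left mult_ac)
lemma cinner_zero_right[simp]: "cinner u 0 = 0"
  unfolding cinner_def by simp
lemma cinner_zero_left[simp]: "cinner 0 u = 0"
  unfolding cinner_def by simp
lemma cinner_sum_right: "finite S \<Longrightarrow> cinner u (sum f S) = (\<Sum>i\<in>S. cinner u (f i))"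
  by (induction S rule: finite_induct) (simp_all add: cinner_add_right)
lemma cinner_cnj: "cnj (cinner u v) = cinner v u"
  unfolding cinner_def by (simp add: mult.commute)
lemma cinner_mat: "cinner u (M *v v) = cinner (ctrans M *v u) v"
proof -
  have "cinner u (M *v v) = (\<Sum>k\<in>UNIV. \<Sum>j\<in>UNIV. cnj (u $ k) * M $ k $ j * v $ j)"
    unfolding cinner_def matrix_vector_mult_def by (simp add: sum_distrib_left mult_ac)
  also have "\<dots> = (\<Sum>j\<in>UNIV. \<Sum>k\<in>UNIV. cnj (u $ k) * M $ k $ j * v $ j)"
    by (rule sum.swap)
  also have "\<dots> = cinner (ctrans M *v u) v"
    unfolding cinner_def matrix_vector_mult_def ctrans_def by (simp add: sum_distrib_left sum_distrib_right mult_ac)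
  finally show ?thesis .
qed
lemma Re_cinner: "Re (cinner u v) = inner u v"
  unfolding cinner_def inner_vec_def by (simp add: inner_complex_def)
lemma Im_cinner_self: "Im (cinner u u) = 0"
  unfolding cinner_def by (simp add: mult.commute)
lemma cinner_self: "cinner u u = of_real ((norm u)^2)"
  by (rule complex_eqI) (simp_all add: Re_cinner Im_cinner_self power2_norm_eq_inner)

section \<open>Conjugate transpose and matrices\<close>

lemma ctrans_ctrans[simp]: "ctrans (ctrans X) = X"
  unfolding ctrans_def by (simp add: vec_eq_iff)
lemma ctrans_mult: "ctrans (A ** B) = ctrans B ** ctrans A"
  unfolding ctrans_def matrix_matrix_mult_def by (simp add: vec_eq_iff mult.commute)
lemma ctrans_add: "ctrans (A + B) = ctrans A + ctrans B"
  unfolding ctrans_def by (simp add: vec_eq_iff)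
lemma ctrans_diff: "ctrans (A - B) = ctrans A - ctrans B"
  unfolding ctrans_def by (simp add: vec_eq_iff)
lemma ctrans_minus: "ctrans (- A) = - ctrans A"
  unfolding ctrans_def by (simp add: vec_eq_iff)
lemma ctrans_zero[simp]: "ctrans 0 = 0"
  unfolding ctrans_def by (simp add: vec_eq_iff)
lemma ctrans_scaleR: "ctrans (r *\<^sub>R A) = r *\<^sub>R ctrans A"
  unfolding ctrans_def by (simp add: vec_eq_iff scaleR_cplx)
lemma ctrans_sum: "finite S \<Longrightarrow> ctrans (sum f S) = (\<Sum>i\<in>S. ctrans (f i))"
  by (induction S rule: finite_induct) (simp_all add: ctrans_add)

lemma matrix_sub_ldistrib: "(A::'a::ring_1^'n^'m) ** (B - C) = A ** B - A ** C"
  by (vector matrix_matrix_mult_def sum_subtractf[symmetric] right_diff_distrib)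
lemma matrix_sub_rdistrib: "((B::'a::ring_1^'n^'m) - C) ** A = B ** A - C ** A"
  by (vector matrix_matrix_mult_def sum_subtractf[symmetric] left_diff_distrib)
lemma matrix_add_rdistrib': "((B::'a::semiring_1^'n^'m) + C) ** A = B ** A + C ** A"
  by (vector matrix_matrix_mult_def sum.distrib[symmetric] distrib_right)
lemma matrix_minus_left: "(- (B::'a::ring_1^'n^'m)) ** A = - (B ** A)"
  by (vector matrix_matrix_mult_def sum_negf[symmetric])
lemma matrix_minus_right: "(A::'a::ring_1^'n^'m) ** (- B) = - (A ** B)"
  by (vector matrix_matrix_mult_def sum_negf[symmetric])

lemma trace_scaleR: "trace (r *\<^sub>R (A::complex^'n^'n)) = r *\<^sub>R trace A"
  unfolding trace_def by (simp add: scaleR_sum_right)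
lemma trace_ctrans: "trace (ctrans A) = cnj (trace A)"
  unfolding trace_def ctrans_def by simp

lemma hermitian_add: "hermitian A \<Longrightarrow> hermitian B \<Longrightarrow> hermitian (A + B)"
  unfolding hermitian_def by (simp add: ctrans_add)
lemma hermitian_diff: "hermitian A \<Longrightarrow> hermitian B \<Longrightarrow> hermitian (A - B)"
  unfolding hermitian_def by (simp add: ctrans_diff)
lemma hermitian_minus: "hermitian A \<Longrightarrow> hermitian (- A)"
  unfolding hermitian_def by (simp add: ctrans_minus)
lemma hermitian_scaleR: "hermitian A \<Longrightarrow> hermitian (r *\<^sub>R A)"
  unfolding hermitian_def by (simp add: ctrans_scaleR)
lemma hermitian_sum: "finite S \<Longrightarrow> (\<And>i. i \<in> S \<Longrightarrow> hermitian (f i)) \<Longrightarrow> hermitian (sum f S)"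
  unfolding hermitian_def by (simp add: ctrans_sum)
lemma hermitian_outer: "hermitian (outer u)"
  unfolding hermitian_def outer_def ctrans_def by (simp add: vec_eq_iff mult.commute)
lemma hermitian_congr: "hermitian M \<Longrightarrow> hermitian (ctrans X ** M ** X)"
  unfolding hermitian_def by (simp add: ctrans_mult matrix_mul_assoc)
lemma hermitian_cross: "hermitian Q \<Longrightarrow> hermitian (ctrans X ** Q ** Y + ctrans Y ** Q ** X)"
  unfolding hermitian_def by (simp add: ctrans_mult ctrans_add matrix_mul_assoc add.commute)

lemma trace_herm_real:
  assumes "hermitian M" "hermitian G"
  shows "Im (trace (M ** G)) = 0"
proof -
  have "cnj (trace (M ** G)) = trace (M ** G)"
    using assms unfolding hermitian_def
    by (metis trace_ctrans ctrans_mult trace_mul_sym)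
  then show ?thesis by (metis Reals_cnj_iff complex_is_Real_iff)
qed

lemma matvec_sum: "finite S \<Longrightarrow> (sum f S) *v x = (\<Sum>i\<in>S. f i *v x)"
  by (induction S rule: finite_induct) (simp_all add: matrix_vector_mult_add_rdistrib)
lemma matvec_scaleR: "(r *\<^sub>R (M::complex^'n^'m)) *v x = r *\<^sub>R (M *v x)"
  unfolding matrix_vector_mult_def by (simp add: vec_eq_iff scaleR_sum_right)
lemma matvec_scaleR_right: "(M::complex^'n^'m) *v (r *\<^sub>R x) = r *\<^sub>R (M *v x)"
  unfolding matrix_vector_mult_def by (simp add: vec_eq_iff scaleR_sum_right scaleR_cplx sum_distrib_left mult_ac)
lemma matvec_smult_right: "(M::complex^'n^'m) *v (c *s x) = c *s (M *v x)"
  unfolding matrix_vector_mult_def by (simp add: vec_eq_iff sum_distrib_left mult_ac)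
lemma matvec_sum_right: "finite S \<Longrightarrow> (M::complex^'n^'m) *v (sum f S) = (\<Sum>i\<in>S. M *v f i)"
  by (induction S rule: finite_induct) (simp_all add: matrix_vector_right_distrib)
lemma outer_mult: "outer u *v x = cinner u x *s u"
  unfolding outer_def matrix_vector_mult_def cinner_def by (simp add: vec_eq_iff sum_distrib_left mult_ac)

lemma psd_congr:
  assumes "psd P" shows "psd (ctrans X ** P ** X)"
proof -
  have "hermitian P" using assms unfolding psd_def by auto
  moreover have "0 \<le> Re (cinner x ((ctrans X ** P ** X) *v x))" for x
  proof -
    have "cinner x ((ctrans X ** P ** X) *v x) = cinner (X *v x) (P *v (X *v x))"
      by (simp add: matrix_vector_mul_assoc[symmetric] cinner_mat)
    then show ?thesis using assms unfolding psd_def by simp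
  qed
  ultimately show ?thesis unfolding psd_def by (simp add: hermitian_congr)
qed

lemma psd_scaleR: "psd M \<Longrightarrow> 0 \<le> r \<Longrightarrow> psd (r *\<^sub>R M)"
  unfolding psd_def by (simp add: hermitian_scaleR matvec_scaleR cinner_scaleR_right)

lemma cinner_outer_nonneg: "0 \<le> Re (cinner x (outer u *v x))"
proof -
  have "cinner x (outer u *v x) = cnj (cinner u x) * cinner u x"
    by (simp add: outer_mult cinner_smult_right cinner_cnj mult.commute)
  then show ?thesis by (simp add: mult.commute complex_mult_cnj[of "cinner u x"])
qed

lemma psd_outer_sum:
  assumes "finite S" "\<And>i. i \<in> S \<Longrightarrow> 0 \<le> c i"
  shows "psd (\<Sum>i\<in>S. c i *\<^sub>R outer (u i))"
  unfolding psd_def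
proof (intro conjI allI)
  show "hermitian (\<Sum>i\<in>S. c i *\<^sub>R outer (u i))"
    using assms by (intro hermitian_sum hermitian_scaleR hermitian_outer)
  fix x
  have "Re (cinner x ((\<Sum>i\<in>S. c i *\<^sub>R outer (u i)) *v x)) = (\<Sum>i\<in>S. c i * Re (cinner x (outer (u i) *v x)))"
    using assms by (simp add: matvec_sum cinner_sum_right matvec_scaleR cinner_scaleR_right Re_sum)
  also have "\<dots> \<ge> 0" using assms by (intro sum_nonneg mult_nonneg_nonneg cinner_outer_nonneg) auto
  finally show "0 \<le> Re (cinner x ((\<Sum>i\<in>S. c i *\<^sub>R outer (u i)) *v x))" .
qed



section \<open>Spectral theorem\<close>

definition onS :: "(complex^'n) set \<Rightarrow> bool" where
  "onS S \<longleftrightarrow> (\<forall>s\<in>S. cinner s s = 1) \<and> (\<forall>s\<in>S. \<forall>t\<in>S. s \<noteq> t \<longrightarrow> cinner s t = 0)"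

lemma cinner_zero_sym: "cinner s z = 0 \<Longrightarrow> cinner z s = 0"
  by (metis cinner_cnj complex_cnj_zero)

lemma cinner_ii: "cinner (\<i> *s s) (\<i> *s t) = cinner s t"
  by (simp add: cinner_smult_left cinner_smult_right)
lemma cinner_i_right: "cinner s (\<i> *s t) = \<i> * cinner s t"
  by (simp add: cinner_smult_right)
lemma cinner_i_left: "cinner (\<i> *s s) t = - \<i> * cinner s t"
  by (simp add: cinner_smult_left)

lemma onS_real:
  fixes S :: "(complex^'n) set"
  assumes "onS S"
  defines "T \<equiv> S \<union> (\<lambda>s. \<i> *s s) ` S"
  shows "finite T \<and> card T \<le> 2 * CARD('n) \<and> finite S \<and> card T = 2 * card S"
proof -
  have S1: "\<And>s. s \<in> S \<Longrightarrow> cinner s s = 1" and S0: "\<And>s t. s \<in> S \<Longrightarrow> t \<in> S \<Longrightarrow> s \<noteq> t \<Longrightarrow> cinner s t = 0"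
    using assms(1) unfolding onS_def by auto
  have T1: "cinner x x = 1" if "x \<in> T" for x
    using that S1 unfolding T_def by (auto simp: cinner_ii)
  have "0 \<notin> T" using T1 by fastforce
  moreover have "pairwise orthogonal T"
    unfolding pairwise_def orthogonal_def
  proof (intro ballI impI)
    fix x y assume x: "x \<in> T" and y: "y \<in> T" and xy: "x \<noteq> y"
    have "Re (cinner x y) = 0"
    proof -
      { fix s t assume s: "s \<in> S" and t: "t \<in> S"
        have "Re (cinner s (\<i> *s t)) = 0"
          using s t S1 S0 by (cases "s = t") (auto simp: cinner_i_right)
      } note mixed = this
      show ?thesis
      proof (cases "x \<in> S")
        case True
        show ?thesis
        proof (cases "y \<in> S")
          case True
          with \<open>x \<in> S\<close> xy S0 show ?thesis by simp
        next
          case False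
          then obtain t where "t \<in> S" "y = \<i> *s t" using y unfolding T_def by auto
          with mixed \<open>x \<in> S\<close> show ?thesis by simp
        qed
      next
        case False
        then obtain s where s: "s \<in> S" "x = \<i> *s s" using x unfolding T_def by auto
        show ?thesis
        proof (cases "y \<in> S")
          case True
          have "Re (cinner x y) = Re (cnj (cinner y x))" by (simp add: cinner_cnj)
          also have "\<dots> = 0" using mixed[OF True s(1)] s(2) by simp
          finally show ?thesis .
        next
          case False
          then obtain t where t: "t \<in> S" "y = \<i> *s t" using y unfolding T_def by auto
          with s xy have "s \<noteq> t" by auto
          with s t S0 show ?thesis by (simp add: cinner_ii)
        qed
      qed
    qed
    then show "x \<bullet> y = 0" by (simp add: Re_cinner)
  qed
  ultimately have ind: "independent T" using pairwise_orthogonal_independent by blast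
  then have finT: "finite T" and cT: "card T \<le> DIM(complex^'n)"
    using independent_bound[OF ind] by auto
  have finS: "finite S" using finT unfolding T_def by auto
  have disj: "S \<inter> (\<lambda>s. \<i> *s s) ` S = {}"
  proof (rule ccontr)
    assume "S \<inter> (\<lambda>s. \<i> *s s) ` S \<noteq> {}"
    then obtain s t where s: "s \<in> S" and t: "t \<in> S" and st: "s = \<i> *s t" by auto
    have "cinner t s = \<i>" using st S1[OF t] by (simp add: cinner_i_right)
    moreover have "cinner t s = 0 \<or> cinner t s = 1" using S0 S1 s t by (cases "s = t") auto
    ultimately show False by auto
  qed
  have inj: "inj_on (\<lambda>s. \<i> *s s) S"
  proof (rule inj_onI)
    fix s t assume "\<i> *s s = \<i> *s t"
    then have "(- \<i>) *s (\<i> *s s) = (- \<i>) *s (\<i> *s t)" by simp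
    then show "s = t" by (simp add: vector_smult_assoc)
  qed
  have "card T = card S + card S"
    unfolding T_def using finS disj card_Un_disjoint[of S "(\<lambda>s. \<i> *s s) ` S"] card_image[OF inj]
    by simp
  then show ?thesis using finT cT finS by simp
qed

lemma onS_card: "onS S \<Longrightarrow> finite S \<and> card (S::(complex^'n) set) \<le> CARD('n)"
  using onS_real[of S] by auto

lemma onS_orth_exists:
  assumes "onS (S::(complex^'n) set)" "card S < CARD('n)"
  shows "\<exists>y. y \<noteq> 0 \<and> (\<forall>s\<in>S. cinner s y = 0)"
proof -
  define T where "T = S \<union> (\<lambda>s. \<i> *s s) ` S"
  have "finite T" "card T = 2 * card S" using onS_real[OF assms(1)] unfolding T_def by auto
  then have "dim T < DIM(complex^'n)" using assms(2) dim_le_card'[of T] by simp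
  then obtain x where x: "x \<noteq> 0" "\<And>y. y \<in> span T \<Longrightarrow> orthogonal x y"
    using orthogonal_to_subspace_exists[of T] by blast
  have "cinner s x = 0" if s: "s \<in> S" for s
  proof -
    have "orthogonal x s" "orthogonal x (\<i> *s s)"
      using x(2) s by (auto simp: T_def intro: span_base)
    then have "Re (cinner s x) = 0" "Re (cinner (\<i> *s s) x) = 0"
      by (auto simp: Re_cinner orthogonal_def inner_commute)
    then show ?thesis by (simp add: cinner_i_left complex_eq_iff)
  qed
  with x show ?thesis by blast
qed

lemma cinner_sum_onS:
  assumes "onS S" "finite S" "t \<in> S"
  shows "cinner t (\<Sum>s\<in>S. c s *s s) = c t"
proof -
  have "cinner t (\<Sum>s\<in>S. c s *s s) = (\<Sum>s\<in>S. c s * cinner t s)"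
    using assms by (simp add: cinner_sum_right cinner_smult_right)
  also have "\<dots> = c t * cinner t t + (\<Sum>s\<in>S - {t}. c s * cinner t s)"
    using assms by (simp add: sum.remove)
  also have "(\<Sum>s\<in>S - {t}. c s * cinner t s) = 0"
    using assms unfolding onS_def by (intro sum.neutral) auto
  finally show ?thesis using assms unfolding onS_def by simp
qed

lemma onS_complete:
  assumes on: "onS (S::(complex^'n) set)" and card: "card S = CARD('n)"
  shows "x = (\<Sum>s\<in>S. cinner s x *s s)"
proof (rule ccontr)
  assume ne: "x \<noteq> (\<Sum>s\<in>S. cinner s x *s s)"
  have finS: "finite S" using onS_card[OF on] by auto
  define y where "y = x - (\<Sum>s\<in>S. cinner s x *s s)"
  have y0: "y \<noteq> 0" using ne unfolding y_def by simp
  have yS: "cinner t y = 0" if "t \<in> S" for t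
    unfolding y_def using cinner_sum_onS[OF on finS that] by (simp add: cinner_diff_right)
  define z where "z = (1 / norm y) *\<^sub>R y"
  have nz: "norm z = 1" using y0 unfolding z_def by simp
  have zz: "cinner z z = 1" using nz by (simp add: cinner_self)
  have zS: "cinner t z = 0" if "t \<in> S" for t
    using yS[OF that] unfolding z_def by (simp add: cinner_scaleR_right)
  have znS: "z \<notin> S" using zS zz by force
  have "onS (insert z S)"
    using on zz zS unfolding onS_def by (auto intro: cinner_zero_sym)
  then have "card (insert z S) \<le> CARD('n)" using onS_card by blast
  then show False using znS finS card by simp
qed

lemma norm_pos_contra:
  fixes a c :: real
  assumes a: "a > 0" and h: "\<And>t. 2 * t * a + t^2 * c \<le> 0"
  shows False
proof -
  define t where "t = a / (\<bar>c\<bar> + 1)"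
  have t0: "t > 0" using a unfolding t_def by simp
  have "t * \<bar>c\<bar> \<le> a"
  proof -
    have "t * \<bar>c\<bar> = a * (\<bar>c\<bar> / (\<bar>c\<bar> + 1))" unfolding t_def by simp
    also have "\<dots> \<le> a * 1" using a by (intro mult_left_mono) auto
    finally show ?thesis by simp
  qed
  then have "t * (t * \<bar>c\<bar>) \<le> t * a" using t0 by (intro mult_left_mono) auto
  moreover have "t^2 * c \<ge> - (t * (t * \<bar>c\<bar>))"
  proof -
    have "t^2 * (- \<bar>c\<bar>) \<le> t^2 * c" by (rule mult_left_mono) auto
    then show ?thesis by (simp add: power2_eq_square)
  qed
  moreover have "t * a > 0" using t0 a by simp
  ultimately have "2 * t * a + t^2 * c > 0" by linarith
  with h[of t] show False by simp
qed

lemma eigen_extend: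
  fixes A :: "complex^'n^'n"
  assumes herm: "hermitian A" and on: "onS S"
    and ev: "\<forall>s\<in>S. \<exists>l::real. A *v s = l *\<^sub>R s" and card: "card S < CARD('n)"
  shows "\<exists>v. v \<notin> S \<and> onS (insert v S) \<and> (\<exists>l::real. A *v v = l *\<^sub>R v)"
proof -
  obtain y where y0: "y \<noteq> 0" and yS: "\<forall>s\<in>S. cinner s y = 0"
    using onS_orth_exists[OF on card] by blast
  define V where "V = {x. \<forall>s\<in>S. cinner s x = 0}"
  define K where "K = V \<inter> sphere 0 1"
  define q where "q = (\<lambda>x. Re (cinner x (A *v x)))"
  have sym: "cinner a (A *v b) = cinner (A *v a) b" for a b
    using herm unfolding hermitian_def by (simp add: cinner_mat)
  have "closed V"
  proof -
    have "V = (\<Inter>s\<in>S. {x. cinner s x = 0})" unfolding V_def by auto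
    moreover have "closed {x::complex^'n. cinner s x = 0}" for s
      unfolding cinner_def by (intro closed_Collect_eq continuous_intros)
    ultimately show ?thesis by auto
  qed
  then have "compact K" unfolding K_def by (intro closed_Int_compact compact_sphere)
  moreover have "(1 / norm y) *\<^sub>R y \<in> K"
    using y0 yS unfolding K_def V_def by (simp add: cinner_scaleR_right)
  then have "K \<noteq> {}" by auto
  moreover have "continuous_on K q"
    unfolding q_def cinner_def matrix_vector_mult_def by (intro continuous_intros)
  ultimately obtain v where vK: "v \<in> K" and vmax: "\<And>x. x \<in> K \<Longrightarrow> q x \<le> q v"
    using continuous_attains_sup[of K q] by blast
  have vV: "\<forall>s\<in>S. cinner s v = 0" and nv: "norm v = 1"
    using vK unfolding K_def V_def by auto
  have vv: "cinner v v = 1" using nv by (simp add: cinner_self)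
  define lam where "lam = q v"
  have vAv: "cinner v (A *v v) = of_real lam"
  proof (rule complex_eqI)
    have "cnj (cinner v (A *v v)) = cinner v (A *v v)"
      by (simp add: cinner_cnj sym)
    then have "Im (cnj (cinner v (A *v v))) = Im (cinner v (A *v v))" by simp
    then show "Im (cinner v (A *v v)) = Im (of_real lam)" by simp
  qed (simp add: lam_def q_def)
  define w where "w = A *v v - lam *\<^sub>R v"
  have AV: "cinner s (A *v v) = 0" if sS: "s \<in> S" for s
  proof -
    obtain l where l: "A *v s = l *\<^sub>R s" using bspec[OF ev sS] by (elim exE)
    have "cinner s (A *v v) = cinner (A *v s) v" by (rule sym)
    also have "\<dots> = of_real l * cinner s v" by (simp only: l cinner_scaleR_left)
    also have "\<dots> = 0" using vV sS by simp
    finally show ?thesis .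
  qed
  have wV: "w \<in> V" unfolding V_def w_def
    using AV vV by (simp add: cinner_diff_right cinner_scaleR_right)
  have vw: "cinner v w = 0" unfolding w_def
    by (simp add: cinner_diff_right cinner_scaleR_right vAv vv)
  have wv: "cinner w v = 0" using vw cinner_cnj[of v w] by simp
  have Av: "A *v v = w + lam *\<^sub>R v" unfolding w_def by simp
  have vAw: "cinner v (A *v w) = cinner w w"
    by (subst sym) (simp add: Av cinner_add_left cinner_scaleR_left vw)
  have wAv: "cinner w (A *v v) = cinner w w"
    by (simp add: Av cinner_add_right cinner_scaleR_right wv)
  have Vadd: "a + b \<in> V" if "a \<in> V" "b \<in> V" for a b
    using that unfolding V_def by (simp add: cinner_add_right)
  have Vscale: "c *\<^sub>R a \<in> V" if "a \<in> V" for a c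
    using that unfolding V_def by (simp add: cinner_scaleR_right)
  have qscale: "q (c *\<^sub>R z) = c^2 * q z" for c z
    unfolding q_def by (simp add: matvec_scaleR_right cinner_scaleR_right cinner_scaleR_left power2_eq_square)
  have hom: "q z \<le> lam * (norm z)^2" if zV: "z \<in> V" for z
  proof (cases "z = 0")
    case True then show ?thesis unfolding q_def by simp
  next
    case False
    define z' where "z' = (1 / norm z) *\<^sub>R z"
    have "z' \<in> K" using False zV Vscale unfolding K_def z'_def by simp
    then have "q z' \<le> lam" using vmax unfolding lam_def by blast
    then have "(1 / norm z)^2 * q z \<le> lam" unfolding z'_def qscale .
    then have "(1 / norm z)^2 * q z * (norm z)^2 \<le> lam * (norm z)^2"
      by (intro mult_right_mono) auto
    then show ?thesis using False by (simp add: field_simps)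
  qed
  define a where "a = Re (cinner w w)"
  define b where "b = q w"
  have "2 * t * a + t^2 * (b - lam * a) \<le> 0" for t
  proof -
    have "v + t *\<^sub>R w \<in> V" using vK wV Vadd Vscale unfolding K_def by auto
    then have h: "q (v + t *\<^sub>R w) \<le> lam * (norm (v + t *\<^sub>R w))^2" by (rule hom)
    have "q (v + t *\<^sub>R w) = lam + 2 * t * a + t^2 * b"
      unfolding q_def a_def b_def
      by (simp add: matrix_vector_right_distrib matvec_scaleR_right cinner_add_left cinner_add_right
          cinner_scaleR_left cinner_scaleR_right vAv vAw wAv power2_eq_square algebra_simps)
    moreover have "(norm (v + t *\<^sub>R w))^2 = 1 + t^2 * a"
    proof -
      have "(norm (v + t *\<^sub>R w))^2 = Re (cinner (v + t *\<^sub>R w) (v + t *\<^sub>R w))"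
        by (simp add: cinner_self)
      also have "\<dots> = 1 + t^2 * a"
        unfolding a_def
        by (simp add: cinner_add_left cinner_add_right cinner_scaleR_left cinner_scaleR_right
            vv vw wv power2_eq_square)
      finally show ?thesis .
    qed
    ultimately show ?thesis using h by (simp add: algebra_simps)
  qed
  moreover have "a = (norm w)^2" unfolding a_def by (simp add: cinner_self)
  ultimately have "w = 0" using norm_pos_contra[of a "b - lam * a"] by fastforce
  then have Avl: "A *v v = lam *\<^sub>R v" using Av by simp
  have vnS: "v \<notin> S" using vV vv by force
  have "onS (insert v S)"
    using on vv vV unfolding onS_def by (auto intro: cinner_zero_sym)
  with vnS Avl show ?thesis by blast
qed

lemma eigen_sets:
  fixes A :: "complex^'n^'n"
  assumes herm: "hermitian A"
  shows "k \<le> CARD('n) \<Longrightarrow> \<exists>S. onS S \<and> card S = k \<and> (\<forall>s\<in>S. \<exists>l::real. A *v s = l *\<^sub>R s)"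
proof (induction k)
  case 0
  have "onS ({} :: (complex^'n) set)" unfolding onS_def by simp
  then show ?case by fastforce
next
  case (Suc k)
  then obtain S where S: "onS S" "card S = k" "\<forall>s\<in>S. \<exists>l::real. A *v s = l *\<^sub>R s" by auto
  then obtain v where v: "v \<notin> S" "onS (insert v S)" "\<exists>l::real. A *v v = l *\<^sub>R v"
    using eigen_extend[OF herm S(1) S(3)] Suc.prems by auto
  have "finite S" using onS_card[OF S(1)] by auto
  then have "card (insert v S) = Suc k" using v(1) S(2) by simp
  with v S show ?case by (intro exI[of _ "insert v S"]) auto
qed

lemma smult_scaleR_comm: "(c::complex) *s (l *\<^sub>R u) = l *\<^sub>R (c *s u)"
  by (simp add: vec_eq_iff scaleR_cplx mult_ac)

theorem spectral:
  fixes A :: "complex^'n^'n"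
  assumes herm: "hermitian A"
  shows "\<exists>lam u. eigen_decomp A lam u"
proof -
  obtain S where S: "onS S" "card S = CARD('n)" "\<forall>s\<in>S. \<exists>l::real. A *v s = l *\<^sub>R s"
    using eigen_sets[OF herm, of "CARD('n)"] by auto
  have finS: "finite S" using onS_card[OF S(1)] by auto
  obtain f where f: "bij_betw f (UNIV::'n set) S"
    using finite_same_card_bij[of "UNIV::'n set" S] finS S(2) by auto
  define lam where "lam i = Re (cinner (f i) (A *v f i))" for i
  have fS: "f i \<in> S" for i using f by (auto simp: bij_betw_def)
  have Af: "A *v f i = lam i *\<^sub>R f i" for i
  proof -
    obtain l where l: "A *v f i = l *\<^sub>R f i" using bspec[OF S(3) fS[of i]] by (elim exE)
    have "cinner (f i) (f i) = 1" using S(1) fS unfolding onS_def by auto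
    then have "lam i = l" unfolding lam_def l by (simp add: cinner_scaleR_right)
    then show ?thesis using l by simp
  qed
  have orth: "cinner (f i) (f j) = (if i = j then 1 else 0)" for i j
  proof (cases "i = j")
    case False
    then have "f i \<noteq> f j" using f by (auto simp: bij_betw_def inj_on_def)
    then show ?thesis using False S(1) fS unfolding onS_def by auto
  qed (use S(1) fS in \<open>auto simp: onS_def\<close>)
  have "A = (\<Sum>i\<in>UNIV. lam i *\<^sub>R outer (f i))"
  proof (subst matrix_eq, intro allI)
    fix x
    have x: "x = (\<Sum>i\<in>UNIV. cinner (f i) x *s f i)"
      using onS_complete[OF S(1) S(2), of x] sum.reindex_bij_betw[OF f, of "\<lambda>s. cinner s x *s s"]
      by simp
    have "A *v x = (\<Sum>i\<in>UNIV. cinner (f i) x *s (A *v f i))"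
      by (subst x) (simp add: matvec_sum_right matvec_smult_right)
    also have "\<dots> = (\<Sum>i\<in>UNIV. lam i *\<^sub>R (cinner (f i) x *s f i))"
      by (simp add: Af smult_scaleR_comm)
    also have "\<dots> = (\<Sum>i\<in>UNIV. lam i *\<^sub>R outer (f i)) *v x"
      by (simp add: matvec_sum matvec_scaleR outer_mult)
    finally show "A *v x = (\<Sum>i\<in>UNIV. lam i *\<^sub>R outer (f i)) *v x" .
  qed
  then have "eigen_decomp A lam f" unfolding eigen_decomp_def using orth by auto
  then show ?thesis by blast
qed



lemma ed_orth: "eigen_decomp A lam u \<Longrightarrow> cinner (u i) (u j) = (if i = j then 1 else 0)"
  unfolding eigen_decomp_def by blast
lemma ed_A: "eigen_decomp A lam u \<Longrightarrow> A = (\<Sum>i\<in>UNIV. lam i *\<^sub>R outer (u i))"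
  unfolding eigen_decomp_def by blast

lemma fsum_apply_u:
  fixes u :: "'k::finite \<Rightarrow> complex^'n"
  assumes "\<And>i j. cinner (u i) (u j) = (if i = j then 1 else 0)"
  shows "(\<Sum>i\<in>UNIV. c i *\<^sub>R outer (u i)) *v u j = c j *\<^sub>R u j"
proof -
  have "(\<Sum>i\<in>UNIV. c i *\<^sub>R outer (u i)) *v u j = (\<Sum>i\<in>UNIV. c i *\<^sub>R (cinner (u i) (u j) *s u i))"
    by (simp add: matvec_sum matvec_scaleR outer_mult)
  also have "\<dots> = (\<Sum>i\<in>UNIV. if i = j then c j *\<^sub>R u j else 0)"
    using assms by (intro sum.cong) auto
  also have "\<dots> = c j *\<^sub>R u j" by simp
  finally show ?thesis .
qed

lemma ed_complete:
  fixes u :: "'n \<Rightarrow> complex^'n"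
  assumes orth: "\<And>i j. cinner (u i) (u j) = (if i = j then 1 else 0)"
  shows "x = (\<Sum>i\<in>UNIV. cinner (u i) x *s u i)"
proof -
  have inj: "inj u"
  proof (rule injI)
    fix i j assume "u i = u j"
    then have "cinner (u i) (u j) = 1" using orth[of i i] by simp
    then show "i = j" using orth[of i j] by (auto split: if_splits)
  qed
  have on: "onS (range u)" unfolding onS_def using orth by auto
  have "card (range u) = CARD('n)" using inj by (simp add: card_image)
  then have "x = (\<Sum>s\<in>range u. cinner s x *s s)" by (rule onS_complete[OF on])
  also have "\<dots> = (\<Sum>i\<in>UNIV. cinner (u i) x *s u i)"
    using inj by (simp add: sum.reindex)
  finally show ?thesis .
qed

lemma spec_fun_unique:
  fixes A :: "complex^'n^'n"
  assumes herm: "hermitian A" and ed1: "eigen_decomp A lam u" and ed2: "eigen_decomp A mu w"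
  shows "(\<Sum>i\<in>UNIV. f (lam i) *\<^sub>R outer (u i)) = (\<Sum>i\<in>UNIV. f (mu i) *\<^sub>R outer (w i))"
proof -
  note ou = ed_orth[OF ed1] and ow = ed_orth[OF ed2]
  have Au: "A *v u i = lam i *\<^sub>R u i" for i
    by (subst ed_A[OF ed1]) (rule fsum_apply_u[OF ou])
  have Aw: "A *v w i = mu i *\<^sub>R w i" for i
    by (subst ed_A[OF ed2]) (rule fsum_apply_u[OF ow])
  have sym: "cinner a (A *v b) = cinner (A *v a) b" for a b
    using herm unfolding hermitian_def by (simp add: cinner_mat)
  have key: "mu j = lam i" if ne: "cinner (w j) (u i) \<noteq> 0" for i j
  proof -
    have "of_real (lam i) * cinner (w j) (u i) = cinner (w j) (A *v u i)"
      by (simp add: Au cinner_scaleR_right)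
    also have "\<dots> = cinner (A *v w j) (u i)" by (rule sym)
    also have "\<dots> = of_real (mu j) * cinner (w j) (u i)"
      by (simp add: Aw cinner_scaleR_left)
    finally have "complex_of_real (lam i) = of_real (mu j)" using ne by simp
    then show ?thesis by simp
  qed
  have F2u: "(\<Sum>j\<in>UNIV. f (mu j) *\<^sub>R outer (w j)) *v u i = f (lam i) *\<^sub>R u i" for i
  proof -
    have "(\<Sum>j\<in>UNIV. f (mu j) *\<^sub>R outer (w j)) *v u i
        = (\<Sum>j\<in>UNIV. f (mu j) *\<^sub>R (cinner (w j) (u i) *s w j))"
      by (simp add: matvec_sum matvec_scaleR outer_mult)
    also have "\<dots> = (\<Sum>j\<in>UNIV. f (lam i) *\<^sub>R (cinner (w j) (u i) *s w j))"
    proof (rule sum.cong)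
      fix j :: 'n
      show "f (mu j) *\<^sub>R (cinner (w j) (u i) *s w j) = f (lam i) *\<^sub>R (cinner (w j) (u i) *s w j)"
        using key[of j i] by (cases "cinner (w j) (u i) = 0") auto
    qed simp
    also have "\<dots> = f (lam i) *\<^sub>R (\<Sum>j\<in>UNIV. cinner (w j) (u i) *s w j)"
      by (simp add: scaleR_sum_right)
    also have "\<dots> = f (lam i) *\<^sub>R u i"
      using ed_complete[OF ow, of "u i"] by simp
    finally show ?thesis .
  qed
  show ?thesis
  proof (subst matrix_eq, intro allI)
    fix x
    have x: "x = (\<Sum>i\<in>UNIV. cinner (u i) x *s u i)" by (rule ed_complete[OF ou])
    have app: "M *v x = (\<Sum>i\<in>UNIV. cinner (u i) x *s (M *v u i))" for M :: "complex^'n^'n"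
      by (subst x) (simp add: matvec_sum_right matvec_smult_right)
    show "(\<Sum>i\<in>UNIV. f (lam i) *\<^sub>R outer (u i)) *v x = (\<Sum>i\<in>UNIV. f (mu i) *\<^sub>R outer (w i)) *v x"
      by (simp only: app F2u fsum_apply_u[OF ou])
  qed
qed

lemma sum_pos_filter:
  fixes lam :: "'n::finite \<Rightarrow> real" and M :: "'n \<Rightarrow> complex^'n^'n"
  shows "(\<Sum>i\<in>{i. lam i > 0}. lam i *\<^sub>R M i) = (\<Sum>i\<in>UNIV. max (lam i) 0 *\<^sub>R M i)"
proof -
  have "(\<Sum>i\<in>UNIV. max (lam i) 0 *\<^sub>R M i) = (\<Sum>i\<in>{i. lam i > 0}. max (lam i) 0 *\<^sub>R M i)"
    by (rule sum.mono_neutral_right) auto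
  also have "\<dots> = (\<Sum>i\<in>{i. lam i > 0}. lam i *\<^sub>R M i)"
    by (rule sum.cong) auto
  finally show ?thesis by simp
qed

lemma sum_neg_filter:
  fixes lam :: "'n::finite \<Rightarrow> real" and M :: "'n \<Rightarrow> complex^'n^'n"
  shows "(\<Sum>i\<in>{i. lam i < 0}. lam i *\<^sub>R M i) = (\<Sum>i\<in>UNIV. min (lam i) 0 *\<^sub>R M i)"
proof -
  have "(\<Sum>i\<in>UNIV. min (lam i) 0 *\<^sub>R M i) = (\<Sum>i\<in>{i. lam i < 0}. min (lam i) 0 *\<^sub>R M i)"
    by (rule sum.mono_neutral_right) auto
  also have "\<dots> = (\<Sum>i\<in>{i. lam i < 0}. lam i *\<^sub>R M i)"
    by (rule sum.cong) auto
  finally show ?thesis by simp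
qed

lemma pos_part_eq:
  fixes A :: "complex^'n^'n"
  assumes herm: "hermitian A" and ed: "eigen_decomp A lam u"
  shows "pos_part A = (\<Sum>i\<in>UNIV. max (lam i) 0 *\<^sub>R outer (u i))"
proof -
  have ex: "\<exists>P. \<exists>lam u. eigen_decomp A lam u \<and> P = (\<Sum>i\<in>{i. lam i > 0}. lam i *\<^sub>R outer (u i))"
    using ed by blast
  obtain lam1 u1 where ed1: "eigen_decomp A lam1 u1"
    and P: "pos_part A = (\<Sum>i\<in>{i. lam1 i > 0}. lam1 i *\<^sub>R outer (u1 i))"
    using someI_ex[OF ex] unfolding pos_part_def by blast
  show ?thesis unfolding P sum_pos_filter
    by (rule spec_fun_unique[OF herm ed1 ed])
qed

lemma neg_part_eq:
  fixes A :: "complex^'n^'n"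
  assumes herm: "hermitian A" and ed: "eigen_decomp A lam u"
  shows "neg_part A = (\<Sum>i\<in>UNIV. min (lam i) 0 *\<^sub>R outer (u i))"
proof -
  have ex: "\<exists>P. \<exists>lam u. eigen_decomp A lam u \<and> P = (\<Sum>i\<in>{i. lam i < 0}. lam i *\<^sub>R outer (u i))"
    using ed by blast
  obtain lam1 u1 where ed1: "eigen_decomp A lam1 u1"
    and P: "neg_part A = (\<Sum>i\<in>{i. lam1 i < 0}. lam1 i *\<^sub>R outer (u1 i))"
    using someI_ex[OF ex] unfolding neg_part_def by blast
  show ?thesis unfolding P sum_neg_filter
    by (rule spec_fun_unique[OF herm ed1 ed])
qed

theorem parts:
  fixes A :: "complex^'n^'n"
  assumes herm: "hermitian A"
  shows "hermitian (pos_part A) \<and> hermitian (neg_part A) \<and> pos_part A + neg_part A = A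
    \<and> psd (pos_part A) \<and> psd (- neg_part A)"
proof -
  obtain lam u where ed: "eigen_decomp A lam u" using spectral[OF herm] by blast
  note P = pos_part_eq[OF herm ed] and N = neg_part_eq[OF herm ed]
  have h1: "hermitian (pos_part A)" unfolding P
    by (intro hermitian_sum hermitian_scaleR hermitian_outer) auto
  have h2: "hermitian (neg_part A)" unfolding N
    by (intro hermitian_sum hermitian_scaleR hermitian_outer) auto
  have "pos_part A + neg_part A = (\<Sum>i\<in>UNIV. (max (lam i) 0 + min (lam i) 0) *\<^sub>R outer (u i))"
    unfolding P N by (simp add: sum.distrib[symmetric] scaleR_add_left)
  also have "\<dots> = (\<Sum>i\<in>UNIV. lam i *\<^sub>R outer (u i))"
    by (rule sum.cong) (auto simp: max_def min_def)
  also have "\<dots> = A" using ed_A[OF ed] by simp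
  finally have s: "pos_part A + neg_part A = A" .
  have p1: "psd (pos_part A)" unfolding P by (rule psd_outer_sum) auto
  have "- neg_part A = (\<Sum>i\<in>UNIV. (- min (lam i) 0) *\<^sub>R outer (u i))"
    unfolding N by (simp add: sum_negf[symmetric])
  moreover have "psd (\<Sum>i\<in>UNIV. (- min (lam i) 0) *\<^sub>R outer (u i))" by (rule psd_outer_sum) auto
  ultimately have p2: "psd (- neg_part A)" by simp
  show ?thesis using h1 h2 s p1 p2 by blast
qed



lemma trace_lin_scale: "Re (trace (G ** (t *\<^sub>R (M::complex^'r^'r)))) = t * Re (trace (G ** M))"
proof -
  have "G ** (t *\<^sub>R M) = t *\<^sub>R (G ** M)"
    by (simp add: matrix_scalar_ac scalar_matrix_assoc)
  then show ?thesis by (simp add: trace_scaleR)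
qed

lemma linear_Lin: "linear (\<lambda>M::complex^'r^'r. Re (trace (G ** M)))"
proof (rule linearI)
  fix M N :: "complex^'r^'r" and t :: real
  show "Re (trace (G ** (M + N))) = Re (trace (G ** M)) + Re (trace (G ** N))"
    by (simp add: matrix_add_ldistrib trace_add)
  show "Re (trace (G ** (t *\<^sub>R M))) = t *\<^sub>R Re (trace (G ** M))"
    by (simp add: trace_lin_scale)
qed

lemma line_deriv:
  fixes g :: "complex^'r^'r \<Rightarrow> real"
  assumes grad: "(g has_derivative (\<lambda>D. Re (trace (G ** D)))) (at W within herm_set)"
    and hW: "hermitian W" and hM: "hermitian M"
  shows "((\<lambda>t. g (W + t *\<^sub>R M)) has_real_derivative Re (trace (G ** M))) (at 0)"
proof -
  define f where "f = (\<lambda>t::real. W + t *\<^sub>R M)"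
  have f: "(f has_derivative (\<lambda>t. t *\<^sub>R M)) (at 0 within UNIV)"
    unfolding f_def by (auto intro!: derivative_eq_intros)
  have img: "f ` UNIV \<subseteq> herm_set"
    unfolding f_def herm_set_def using hW hM by (auto intro!: hermitian_add hermitian_scaleR)
  have g': "(g has_derivative (\<lambda>D. Re (trace (G ** D)))) (at (f 0) within f ` UNIV)"
    using has_derivative_subset[OF grad img] unfolding f_def by simp
  have "((g \<circ> f) has_derivative ((\<lambda>D. Re (trace (G ** D))) \<circ> (\<lambda>t. t *\<^sub>R M))) (at 0 within UNIV)"
    by (rule diff_chain_within[OF f g'])
  moreover have "((\<lambda>D. Re (trace (G ** D))) \<circ> (\<lambda>t. t *\<^sub>R M)) = (\<lambda>t. Re (trace (G ** M)) * t)"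
    by (auto simp: trace_lin_scale)
  ultimately show ?thesis
    unfolding has_field_derivative_def f_def comp_def by simp
qed

lemma mono_deriv:
  fixes g :: "complex^'r^'r \<Rightarrow> real"
  assumes grad: "(g has_derivative (\<lambda>D. Re (trace (G ** D)))) (at W within herm_set)"
    and hW: "hermitian W" and hM: "hermitian M"
    and le: "\<And>t. t > 0 \<Longrightarrow> g (W + t *\<^sub>R M) \<le> g W"
  shows "Re (trace (G ** M)) \<le> 0"
proof (rule ccontr)
  assume "\<not> Re (trace (G ** M)) \<le> 0"
  then have pos: "Re (trace (G ** M)) > 0" by simp
  obtain d where d: "d > 0" "\<And>h. h > 0 \<Longrightarrow> h < d \<Longrightarrow> g (W + 0 *\<^sub>R M) < g (W + (0 + h) *\<^sub>R M)"
    using DERIV_pos_inc_right[OF line_deriv[OF grad hW hM] pos] by blast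
  have "g W < g (W + (d/2) *\<^sub>R M)" using d(2)[of "d/2"] d(1) by simp
  with le[of "d/2"] d(1) show False by simp
qed

lemma tangent_ineq:
  fixes g :: "complex^'r^'r \<Rightarrow> real"
  assumes grad: "(g has_derivative (\<lambda>D. Re (trace (G ** D)))) (at W within herm_set)"
    and cvx: "convex_on herm_set g"
    and hW: "hermitian W" and hV: "hermitian V"
  shows "g W + Re (trace (G ** (V - W))) \<le> g V"
proof -
  define phi where "phi = (\<lambda>t. g (W + t *\<^sub>R (V - W)))"
  have hD: "hermitian (V - W)" using hV hW by (rule hermitian_diff)
  have d: "(phi has_field_derivative Re (trace (G ** (V - W)))) (at 0 within UNIV)"
    unfolding phi_def using line_deriv[OF grad hW hD] by simp
  have inH: "W + x *\<^sub>R (V - W) \<in> herm_set" for x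
    unfolding herm_set_def using hW hD by (auto intro!: hermitian_add hermitian_scaleR)
  have "convex_on UNIV phi"
  proof (rule convex_onI)
    fix t x y :: real assume t: "t > 0" "t < 1"
    have eq: "W + ((1 - t) *\<^sub>R x + t *\<^sub>R y) *\<^sub>R (V - W)
        = (1 - t) *\<^sub>R (W + x *\<^sub>R (V - W)) + t *\<^sub>R (W + y *\<^sub>R (V - W))"
      by (simp add: algebra_simps)
    show "phi ((1 - t) *\<^sub>R x + t *\<^sub>R y) \<le> (1 - t) * phi x + t * phi y"
      unfolding phi_def eq using convex_onD[OF cvx, of t "W + x *\<^sub>R (V - W)" "W + y *\<^sub>R (V - W)"] t inH
      by simp
  qed simp
  then have "phi 1 - phi 0 \<ge> Re (trace (G ** (V - W))) * (1 - 0)"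
    using convex_on_imp_above_tangent[of UNIV phi 0 1] d by simp
  then show ?thesis unfolding phi_def by simp
qed

definition qf :: "complex^'n^'n \<Rightarrow> complex^'r^'n \<Rightarrow> complex^'r^'n \<Rightarrow> complex^'r^'r" where
  "qf M x y = ctrans x ** M ** y"

lemma bilinear_qf: "bilinear (qf M)"
  unfolding bilinear_def
proof (intro conjI allI)
  fix x y
  show "linear (qf M x)"
    by (rule linearI) (simp_all add: qf_def matrix_add_ldistrib matrix_scalar_ac scalar_matrix_assoc)
  show "linear (\<lambda>x. qf M x y)"
    by (rule linearI) (simp_all add: qf_def ctrans_add ctrans_scaleR matrix_add_rdistrib' scalar_matrix_assoc)
qed

lemma bilinear_compose_linear:
  assumes "bilinear h" "linear L"
  shows "bilinear (\<lambda>x y. L (h x y))"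
  using assms unfolding bilinear_def
  by (auto intro: linear_compose[unfolded comp_def])



theorem theorem1:
  fixes A :: "complex^'n^'n" and g :: "complex^'r^'r \<Rightarrow> real"
    and X0 :: "complex^'r^'n" and mnd :: bool
  assumes "hermitian A"
    and "in_G g"
    and "if mnd then MND g else MNI g"
  shows "(\<forall>X. Im (lfun mnd g A X0 X) = 0) \<and> concave_on UNIV (\<lambda>X. Re (lfun mnd g A X0 X))
    \<and> (\<forall>X. Re (lfun mnd g A X0 X) \<le> g (ctrans X ** A ** X))
    \<and> lfun mnd g A X0 X0 = complex_of_real (g (ctrans X0 ** A ** X0))
    \<and> (\<exists>D. ((\<lambda>X. Re (lfun mnd g A X0 X)) has_derivative D) (at X0) \<and>
             ((\<lambda>X. g (ctrans X ** A ** X)) has_derivative D) (at X0))"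
proof -
  note hA = assms(1)
  have cvx: "convex_on herm_set g" and gex: "\<forall>W\<in>herm_set. \<exists>G. is_gradient g W G"
    using assms(2) unfolding in_G_def by auto
  define W0 where "W0 = ctrans X0 ** A ** X0"
  define G where "G = grad g W0"
  have hW0: "hermitian W0" unfolding W0_def by (rule hermitian_congr[OF hA])
  have "\<exists>G. is_gradient g W0 G" using gex hW0 unfolding herm_set_def by auto
  then have "is_gradient g W0 G" unfolding G_def grad_def by (rule someI_ex)
  then have hG: "hermitian G" and grad: "(g has_derivative (\<lambda>D. Re (trace (G ** D)))) (at W0 within herm_set)"
    unfolding is_gradient_def by auto
  define P where "P = pos_part A"
  define N where "N = neg_part A"
  have hP: "hermitian P" and hN: "hermitian N" and PN: "P + N = A" and pP: "psd P" and pN: "psd (- N)"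
    using parts[OF hA] unfolding P_def N_def by auto
  define R where "R = (if mnd then N else P)"
  define Q where "Q = (if mnd then P else N)"
  have hR: "hermitian R" and hQ: "hermitian Q" using hP hN unfolding R_def Q_def by auto
  have RQ: "A = R + Q" using PN unfolding R_def Q_def by (auto simp: add.commute)
  define Lf where "Lf X = ctrans X ** R ** X + ctrans X ** Q ** X0 + ctrans X0 ** Q ** X - ctrans X0 ** Q ** X0" for X
  have Lmat_eq: "Lmat mnd A X0 X = Lf X" for X
    unfolding Lmat_def Lf_def Let_def R_def Q_def P_def N_def by simp
  have hL: "hermitian (Lf X)" for X
  proof -
    have "Lf X = ctrans X ** R ** X + (ctrans X ** Q ** X0 + ctrans X0 ** Q ** X) - ctrans X0 ** Q ** X0"
      unfolding Lf_def by (simp add: add.assoc)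
    then show ?thesis
      using hermitian_congr[OF hR, of X] hermitian_cross[OF hQ, of X X0] hermitian_congr[OF hQ, of X0]
      by (simp add: hermitian_add hermitian_diff)
  qed
  have keyid: "ctrans X ** A ** X - Lf X = ctrans (X - X0) ** Q ** (X - X0)" for X
    unfolding Lf_def RQ
    by (simp add: ctrans_diff matrix_sub_rdistrib matrix_sub_ldistrib matrix_add_ldistrib matrix_add_rdistrib' algebra_simps)
  have L0: "Lf X0 = W0"
    unfolding Lf_def W0_def RQ by (simp add: matrix_add_ldistrib matrix_add_rdistrib')
  have lf: "lfun mnd g A X0 X = trace (Lf X ** G) + of_real (g W0) - trace (W0 ** G)" for X
  proof -
    have "ctrans (Lf X) = Lf X" using hL[of X] unfolding hermitian_def .
    then show ?thesis
      unfolding lfun_def Let_def W0_def[symmetric] G_def[symmetric] Lmat_eq by simp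
  qed
  have ReL: "Re (lfun mnd g A X0 X) = g W0 + Re (trace (G ** (Lf X - W0)))" for X
    by (simp add: lf matrix_sub_ldistrib trace_sub trace_mul_sym[of "Lf X" G] trace_mul_sym[of W0 G])
  have ImL: "Im (lfun mnd g A X0 X) = 0" for X
    using trace_herm_real[OF hL hG, of X] trace_herm_real[OF hW0 hG] by (simp add: lf)
  have part3: "lfun mnd g A X0 X0 = complex_of_real (g (ctrans X0 ** A ** X0))"
    by (simp add: lf L0 W0_def[symmetric])
  have tan: "g W0 + Re (trace (G ** (Lf X - W0))) \<le> g (Lf X)" for X
    by (rule tangent_ineq[OF grad cvx hW0 hL])
  have mono: "g (Lf X) \<le> g (ctrans X ** A ** X)" for X
  proof (cases mnd)
    case True
    then have "MND g" using assms(3) by simp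
    moreover have "psd (ctrans X ** A ** X - Lf X)"
      unfolding keyid using psd_congr[OF pP] True unfolding Q_def by simp
    ultimately show ?thesis
      unfolding MND_def using hermitian_congr[OF hA, of X] hL[of X] by blast
  next
    case False
    then have "MNI g" using assms(3) by simp
    moreover have "psd (Lf X - ctrans X ** A ** X)"
    proof -
      have "Lf X - ctrans X ** A ** X = - (ctrans X ** A ** X - Lf X)" by simp
      also have "\<dots> = ctrans (X - X0) ** (- N) ** (X - X0)"
        unfolding keyid using False unfolding Q_def by (simp add: matrix_minus_right matrix_minus_left)
      finally show ?thesis using psd_congr[OF pN] by simp
    qed
    ultimately show ?thesis
      unfolding MNI_def using hermitian_congr[OF hA, of X] hL[of X] by blast
  qed
  have part2: "Re (lfun mnd g A X0 X) \<le> g (ctrans X ** A ** X)" for X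
    using ReL[of X] tan[of X] mono[of X] by simp
  have neg: "Re (trace (G ** (ctrans d ** R ** d))) \<le> 0" for d
  proof (rule mono_deriv[OF grad hW0 hermitian_congr[OF hR]])
    fix t :: real assume t: "t > 0"
    have hM: "hermitian (W0 + t *\<^sub>R (ctrans d ** R ** d))"
      by (intro hermitian_add hW0 hermitian_scaleR hermitian_congr hR)
    show "g (W0 + t *\<^sub>R (ctrans d ** R ** d)) \<le> g W0"
    proof (cases mnd)
      case True
      then have "MND g" using assms(3) by simp
      moreover have "psd (W0 - (W0 + t *\<^sub>R (ctrans d ** R ** d)))"
      proof -
        have "W0 - (W0 + t *\<^sub>R (ctrans d ** R ** d)) = t *\<^sub>R (ctrans d ** (- N) ** d)"
          using True unfolding R_def by (simp add: matrix_minus_right matrix_minus_left)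
        then show ?thesis using psd_scaleR[OF psd_congr[OF pN, of d], of t] t by simp
      qed
      ultimately show ?thesis unfolding MND_def using hW0 hM by blast
    next
      case False
      then have "MNI g" using assms(3) by simp
      moreover have "psd ((W0 + t *\<^sub>R (ctrans d ** R ** d)) - W0)"
        using psd_scaleR[OF psd_congr[OF pP, of d], of t] t False unfolding R_def by simp
      ultimately show ?thesis unfolding MNI_def using hW0 hM by blast
    qed
  qed
  define bet where "bet x y = Re (trace (G ** qf R x y))" for x y
  define ell where "ell x = Re (trace (G ** (qf Q x X0 + qf Q X0 x)))" for x
  define c where "c = g W0 - Re (trace (G ** qf Q X0 X0)) - Re (trace (G ** W0))"
  have fexp: "Re (lfun mnd g A X0 X) = bet X X + ell X + c" for X
  proof -
    have "Lf X - W0 = qf R X X + (qf Q X X0 + qf Q X0 X) - qf Q X0 X0 - W0"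
      unfolding Lf_def qf_def by (simp add: add.assoc)
    then show ?thesis
      unfolding ReL bet_def ell_def c_def
      by (simp add: matrix_add_ldistrib matrix_sub_ldistrib trace_add trace_sub)
  qed
  have bb: "bilinear bet"
    unfolding bet_def by (rule bilinear_compose_linear[OF bilinear_qf linear_Lin])
  have lell: "linear ell"
  proof (rule linearI)
    fix x y :: "complex^'r^'n" and t :: real
    show "ell (x + y) = ell x + ell y"
      unfolding ell_def
      by (simp add: bilinear_ladd[OF bilinear_qf] bilinear_radd[OF bilinear_qf] matrix_add_ldistrib trace_add)
    show "ell (t *\<^sub>R x) = t *\<^sub>R ell x"
    proof -
      have "qf Q (t *\<^sub>R x) X0 + qf Q X0 (t *\<^sub>R x) = t *\<^sub>R (qf Q x X0 + qf Q X0 x)"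
        by (simp add: bilinear_lmul[OF bilinear_qf] bilinear_rmul[OF bilinear_qf] scaleR_add_right)
      then show ?thesis unfolding ell_def by (simp add: trace_lin_scale)
    qed
  qed
  have negbet: "bet d d \<le> 0" for d
    unfolding bet_def qf_def using neg[of d] .
  have part1: "concave_on UNIV (\<lambda>X. Re (lfun mnd g A X0 X))"
    unfolding concave_on_iff
  proof (intro conjI ballI allI impI convex_UNIV)
    fix x y :: "complex^'r^'n" and u v :: real
    assume u: "u \<ge> 0" and v: "v \<ge> 0" and uv: "u + v = 1"
    have e1: "bet (u *\<^sub>R x + v *\<^sub>R y) (u *\<^sub>R x + v *\<^sub>R y)
        = u * u * bet x x + u * v * bet x y + u * v * bet y x + v * v * bet y y"
      by (simp add: bilinear_ladd[OF bb] bilinear_radd[OF bb] bilinear_lmul[OF bb] bilinear_rmul[OF bb] algebra_simps)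
    have e2: "bet (x - y) (x - y) = bet x x - bet x y - bet y x + bet y y"
      by (simp add: bilinear_lsub[OF bb] bilinear_rsub[OF bb])
    have e3: "ell (u *\<^sub>R x + v *\<^sub>R y) = u * ell x + v * ell y"
      by (simp add: linear_add[OF lell] linear_scale[OF lell])
    have K: "u * v * (bet x x - bet x y - bet y x + bet y y) \<le> 0"
      using negbet[of "x - y"] u v e2 by (simp add: mult_nonneg_nonpos)
    have F: "Re (lfun mnd g A X0 (u *\<^sub>R x + v *\<^sub>R y))
        = u * u * bet x x + u * v * bet x y + u * v * bet y x + v * v * bet y y + (u * ell x + v * ell y) + c"
      using fexp e1 e3 by simp
    have id: "(u * u * bet x x + u * v * bet x y + u * v * bet y x + v * v * bet y y + (u * ell x + v * ell y) + c)
        - (u * (bet x x + ell x + c) + v * (bet y y + ell y + c))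
        = - (u * v * (bet x x - bet x y - bet y x + bet y y))"
      using uv by algebra
    show "u * Re (lfun mnd g A X0 x) + v * Re (lfun mnd g A X0 y)
        \<le> Re (lfun mnd g A X0 (u *\<^sub>R x + v *\<^sub>R y))"
    proof -
      have "u * Re (lfun mnd g A X0 x) + v * Re (lfun mnd g A X0 y)
          = u * (bet x x + ell x + c) + v * (bet y y + ell y + c)"
        by (simp only: fexp)
      then show ?thesis unfolding F using id K by linarith
    qed
  qed
  have part4: "\<exists>D. ((\<lambda>X. Re (lfun mnd g A X0 X)) has_derivative D) (at X0) \<and>
             ((\<lambda>X. g (ctrans X ** A ** X)) has_derivative D) (at X0)"
  proof -
    have bbq: "bounded_bilinear bet" using bb bilinear_conv_bounded_bilinear by blast
    have blell: "bounded_linear ell" using lell linear_conv_bounded_linear by blast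
    define D1 where "D1 = (\<lambda>h. (bet X0 h + bet h X0) + ell h + 0)"
    have "((\<lambda>X. bet X X + ell X + c) has_derivative D1) (at X0)"
      unfolding D1_def
      by (intro has_derivative_add bounded_bilinear.FDERIV[OF bbq] has_derivative_ident
          bounded_linear_imp_has_derivative[OF blell] has_derivative_const)
    moreover have "(\<lambda>X. Re (lfun mnd g A X0 X)) = (\<lambda>X. bet X X + ell X + c)"
      by (rule ext) (rule fexp)
    ultimately have d1: "((\<lambda>X. Re (lfun mnd g A X0 X)) has_derivative D1) (at X0)" by simp
    have bqA: "bounded_bilinear (qf A)" using bilinear_qf bilinear_conv_bounded_bilinear by blast
    define S where "S = (\<lambda>X::complex^'r^'n. qf A X X)"
    have dS: "(S has_derivative (\<lambda>h. qf A X0 h + qf A h X0)) (at X0 within UNIV)"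
      unfolding S_def by (intro bounded_bilinear.FDERIV[OF bqA] has_derivative_ident)
    have img: "S ` UNIV \<subseteq> herm_set"
      unfolding S_def herm_set_def qf_def using hermitian_congr[OF hA] by auto
    have g': "(g has_derivative (\<lambda>D. Re (trace (G ** D)))) (at (S X0) within S ` UNIV)"
      using has_derivative_subset[OF grad img] unfolding S_def qf_def W0_def by simp
    have "((g \<circ> S) has_derivative ((\<lambda>D. Re (trace (G ** D))) \<circ> (\<lambda>h. qf A X0 h + qf A h X0))) (at X0 within UNIV)"
      by (rule diff_chain_within[OF dS g'])
    moreover have "g \<circ> S = (\<lambda>X. g (ctrans X ** A ** X))" unfolding S_def qf_def by auto
    ultimately obtain D2 where d2: "((\<lambda>X. g (ctrans X ** A ** X)) has_derivative D2) (at X0)" by auto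
    have "((\<lambda>X. g (ctrans X ** A ** X) - Re (lfun mnd g A X0 X)) has_derivative (\<lambda>h. D2 h - D1 h)) (at X0)"
      by (rule has_derivative_diff[OF d2 d1])
    moreover have "eventually (\<lambda>y. g (ctrans X0 ** A ** X0) - Re (lfun mnd g A X0 X0)
        \<le> g (ctrans y ** A ** y) - Re (lfun mnd g A X0 y)) (at X0)"
      using part3 part2 by (intro always_eventually) simp
    ultimately have "(\<lambda>h. D2 h - D1 h) = (\<lambda>h. 0)" by (rule has_derivative_local_min)
    then have "D2 = D1" by (intro ext) (metis (no_types) eq_iff_diff_eq_0)
    with d1 d2 show ?thesis by blast
  qed
  show ?thesis using ImL part1 part2 part3 part4 by blast
qed


end
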